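(* Let $R$ be a finite group of squarefree order with trivial centre, of the form $R=N\rtimes M$ with $N$ cyclic of order $n$ and $M$ cyclic of order $m$. Suppose that for every pair of primes $p,q$ with $p\mid m$ and $q\mid n$, every subgroup of $R$ of order $pq$ is nonabelian. Let $H$ be a characteristic subgroup of prime index in $R$. If $m$ is not prime, then $\mathbf{C}_{\mathrm{Aut}(R)}(H)=1$, i.e. the only automorphism of $R$ fixing every element of $H$ is the identity.
   Context: $\mathbf{C}_{\mathrm{Aut}(R)}(H)$ denotes the set of automorphisms of $R$ that fix $H$ pointwise. *)

theory Defs
  imports "HOL-Algebra.Algebra" "HOL-Computational_Algebra.Squarefree"
begin

definition group_centre :: "('a, 'b) monoid_scheme \<Rightarrow> 'a set" where
  "group_centre G = {z \<in> carrier G. \<forall>x \<in> carrier G. z \<otimes>\<^bsub>G\<^esub> x = x \<otimes>\<^bsub>G\<^esub> z}"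

definition characteristic :: "'a set \<Rightarrow> ('a, 'b) monoid_scheme \<Rightarrow> bool" where
  "characteristic H G \<longleftrightarrow> subgroup H G \<and> (\<forall>\<phi> \<in> iso G G. \<phi> ` H = H)"

end

theory Submission
  imports Defs
begin

lemma (in comm_group) commutator_one:
  "a \<in> carrier G \<Longrightarrow> b \<in> carrier G \<Longrightarrow> a \<otimes> b \<otimes> inv a \<otimes> inv b = \<one>"
proof -
  assume c: "a \<in> carrier G" "b \<in> carrier G"
  have "a \<otimes> b \<otimes> inv a \<otimes> inv b = b \<otimes> a \<otimes> inv a \<otimes> inv b" using m_comm[OF c] by simp
  also have "\<dots> = \<one>" using c by (simp add: m_assoc)
  finally show ?thesis .
qed

context group begin

lemma prime_order_comm:
  assumes "Factorial_Ring.prime (order G)" shows "comm_group G"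
proof -
  have fin: "finite (carrier G)"
  proof (rule ccontr)
    assume "infinite (carrier G)" hence "order G = 0" by (simp add: order_def)
    thus False using assms by simp
  qed
  have "carrier G \<noteq> {\<one>}" using assms unfolding order_def by auto
  then obtain u where u: "u \<in> carrier G" "u \<noteq> \<one>" by blast
  have "ord u dvd order G" by (rule ord_dvd_group_order[OF u(1)])
  moreover have "ord u \<noteq> 1" using ord_eq_1 u by blast
  ultimately have o: "ord u = order G" using prime_nat_iff[THEN iffD1, OF assms] by blast
  have sub: "generate G {u} \<subseteq> carrier G" using u generate_incl by blast
  have "card (generate G {u}) = card (carrier G)" using generate_pow_card[OF u(1)] o by (simp add: order_def)
  hence "generate G {u} = carrier G" using card_subset_eq[OF fin sub] by blast
  hence "carrier G = range (\<lambda>n::int. u [^] n)" using generate_pow[OF u(1)] by (simp add: full_SetCompr_eq)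
  hence "cyclic_group G" using cyclic_group u(1) by blast
  thus ?thesis by (rule cyclic_imp_abelian_group)
qed

lemma quot_facts:
  assumes "H \<lhd> G" "Factorial_Ring.prime (card (rcosets H))" "x \<in> carrier G" "y \<in> carrier G"
  shows "x \<otimes> y \<otimes> inv x \<otimes> inv y \<in> H" "x [^] card (rcosets H) \<in> H"
proof -
  interpret N: normal H G by fact
  let ?F = "G Mod H"
  have gF: "group ?F" by (rule N.factorgroup_is_group)
  have oF: "order ?F = card (rcosets H)" by (simp add: order_def FactGroup_def)
  interpret F: comm_group ?F using group.prime_order_comm[OF gF] oF assms(2) by simp
  have hom: "(\<lambda>a. H #> a) \<in> hom G ?F" by (rule N.r_coset_hom_Mod)
  interpret h: group_hom G ?F "\<lambda>a. H #> a" using hom gF by (unfold_locales) auto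
  have sH: "subgroup H G" using assms(1) normal_def by blast
  have xc: "H #> x \<in> carrier ?F" using assms(3) hom unfolding hom_def by auto
  have yc: "H #> y \<in> carrier ?F" using assms(4) hom unfolding hom_def by auto
  have "H #> (x [^] card (rcosets H)) = (H #> x) [^]\<^bsub>?F\<^esub> card (rcosets H)"
    using N.FactGroup_pow[OF assms(3)] by simp
  also have "\<dots> = \<one>\<^bsub>?F\<^esub>" using F.pow_order_eq_1[OF xc] oF by simp
  finally have e1: "H #> (x [^] card (rcosets H)) = H" by simp
  show "x [^] card (rcosets H) \<in> H" by (rule coset_join1[OF e1 _ sH]) (use assms(3) in simp)
  have "H #> (x \<otimes> y \<otimes> inv x \<otimes> inv y) = (H #> x) \<otimes>\<^bsub>?F\<^esub> (H #> y) \<otimes>\<^bsub>?F\<^esub> inv\<^bsub>?F\<^esub> (H #> x) \<otimes>\<^bsub>?F\<^esub> inv\<^bsub>?F\<^esub> (H #> y)"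
    using assms(3,4) by (simp add: h.hom_mult h.hom_inv)
  also have "\<dots> = \<one>\<^bsub>?F\<^esub>" using F.commutator_one[OF xc yc] .
  finally have e2: "H #> (x \<otimes> y \<otimes> inv x \<otimes> inv y) = H" by simp
  show "x \<otimes> y \<otimes> inv x \<otimes> inv y \<in> H" by (rule coset_join1[OF e2 _ sH]) (use assms(3,4) in simp)
qed

lemma cyclic_sub:
  assumes "subgroup S G" "cyclic_group (subgroup_generated G S)"
  shows "\<exists>g\<in>S. S = range (\<lambda>k::int. g [^] k)"
proof -
  have gS: "group (subgroup_generated G S)" by (rule group_subgroup_generated)
  have cS: "carrier (subgroup_generated G S) = S"
    using assms(1) subgroup.carrier_subgroup_generated_subgroup by blast
  obtain x where x: "x \<in> carrier (subgroup_generated G S)"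
    "carrier (subgroup_generated G S) = range (\<lambda>n::int. x [^]\<^bsub>subgroup_generated G S\<^esub> n)"
    using group.cyclic_group[OF gS] assms(2) by blast
  have "x \<in> S" using x(1) cS by simp
  moreover have "S = range (\<lambda>k::int. x [^] k)" using x cS int_pow_subgroup_generated[OF x(1)] by auto
  ultimately show ?thesis by blast
qed

lemma card_mult_sub:
  assumes "subgroup A G" "subgroup B G" "A \<inter> B = {\<one>}"
  shows "card (A <#> B) = card A * card B"
proof -
  have img: "A <#> B = (\<lambda>(a,b). a \<otimes> b) ` (A \<times> B)" unfolding set_mult_def by auto
  have "inj_on (\<lambda>(a,b). a \<otimes> b) (A \<times> B)"
  proof (rule inj_onI, clarify)
    fix a b a' b' assume h: "a \<in> A" "b \<in> B" "a' \<in> A" "b' \<in> B" "a \<otimes> b = a' \<otimes> b'"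
    have c: "a \<in> carrier G" "b \<in> carrier G" "a' \<in> carrier G" "b' \<in> carrier G"
      using subgroup.mem_carrier[OF assms(1) h(1)] subgroup.mem_carrier[OF assms(2) h(2)]
        subgroup.mem_carrier[OF assms(1) h(3)] subgroup.mem_carrier[OF assms(2) h(4)] by auto
    have "inv a' \<otimes> a = inv a' \<otimes> (a \<otimes> b) \<otimes> inv b" using c by (simp add: m_assoc)
    also have "\<dots> = inv a' \<otimes> (a' \<otimes> b') \<otimes> inv b" using h(5) by simp
    also have "\<dots> = b' \<otimes> inv b" using c by (simp add: m_assoc[symmetric])
    finally have e: "inv a' \<otimes> a = b' \<otimes> inv b" .
    have "inv a' \<otimes> a \<in> A" using h assms(1) by (simp add: subgroup.m_closed subgroup.m_inv_closed)
    moreover have "b' \<otimes> inv b \<in> B" using h assms(2) by (simp add: subgroup.m_closed subgroup.m_inv_closed)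
    ultimately have "inv a' \<otimes> a = \<one>" using e assms(3) by auto
    hence "a' \<otimes> (inv a' \<otimes> a) = a'" using c by simp
    hence "a = a'" using c by (simp add: m_assoc[symmetric])
    thus "a = a' \<and> b = b'" using h(5) c by simp
  qed
  from card_image[OF this] show ?thesis by (simp add: img card_cartesian_product)
qed

lemma ord_dvd_sub:
  assumes "subgroup S G" "x \<in> S" "finite (carrier G)"
  shows "ord x dvd card S"
proof -
  have g: "group (G\<lparr>carrier := S\<rparr>)" using subgroup.subgroup_is_group[OF assms(1) is_group] .
  have xS: "x \<in> carrier (G\<lparr>carrier := S\<rparr>)" using assms(2) by simp
  have 1: "x [^]\<^bsub>G\<lparr>carrier := S\<rparr>\<^esub> order (G\<lparr>carrier := S\<rparr>) = \<one>\<^bsub>G\<lparr>carrier := S\<rparr>\<^esub>"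
    by (rule group.pow_order_eq_1[OF g xS])
  have 2: "order (G\<lparr>carrier := S\<rparr>) = card S" unfolding order_def by simp
  have 3: "x [^]\<^bsub>G\<lparr>carrier := S\<rparr>\<^esub> card S = x [^] card S" by (rule nat_pow_consistent[symmetric])
  have 4: "\<one>\<^bsub>G\<lparr>carrier := S\<rparr>\<^esub> = \<one>" by simp
  have "x [^] card S = \<one>" using 1 unfolding 2 3 4 .
  moreover have xG: "x \<in> carrier G" by (rule subgroup.mem_carrier[OF assms(1,2)])
  ultimately show ?thesis using pow_eq_id[OF xG, of "card S"] by simp
qed

end

context group begin

lemma sub_pow_closed: "subgroup S G \<Longrightarrow> x \<in> S \<Longrightarrow> x [^] (k::nat) \<in> S"
  using subgroup_int_pow_closed[of S x "int k"] by (simp add: int_pow_int)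

lemma comm_pow:
  assumes "x \<in> carrier G" "y \<in> carrier G" "x \<otimes> y = y \<otimes> x"
  shows "x [^] (n::nat) \<otimes> y = y \<otimes> x [^] n"
proof (induction n)
  case 0 then show ?case using assms by simp
next
  case (Suc n)
  have "x [^] Suc n \<otimes> y = x [^] n \<otimes> (x \<otimes> y)" using assms by (simp add: m_assoc)
  also have "\<dots> = (x [^] n \<otimes> y) \<otimes> x" using assms by (simp add: m_assoc)
  also have "\<dots> = y \<otimes> x [^] Suc n" using assms Suc by (simp add: m_assoc)
  finally show ?case .
qed

lemma prime_elem:
  assumes "finite (carrier G)" "x \<in> carrier G" "x \<noteq> \<one>"
  obtains q where "Factorial_Ring.prime q" "q dvd ord x" "ord (x [^] (ord x div q)) = q"
proof -
  have "ord x \<noteq> 1" using ord_eq_1 assms(2,3) by blast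
  then obtain q where q: "Factorial_Ring.prime q" "q dvd ord x" using prime_factor_nat by blast
  then obtain k where k: "ord x = q * k" by (elim dvdE)
  have "ord x \<ge> 1" by (rule ord_ge_1[OF assms(1,2)])
  hence k0: "k \<noteq> 0" "q \<noteq> 0" using k by auto
  have kd: "ord x div q = k" using k k0 by simp
  have "ord (x [^] k) = ord x div k" by (rule ord_pow[OF assms(2)]) (use k k0 in auto)
  also have "\<dots> = q" using k k0 by simp
  finally show ?thesis using that q kd by simp
qed

lemma no_comm:
  assumes fin: "finite (carrier G)" and sN: "subgroup N G" and sM: "subgroup M G"
    and NM: "N \<inter> M = {\<one>}" and sq: "squarefree (order G)" and prod: "N <#> M = carrier G"
    and hyp: "\<And>p q K. Factorial_Ring.prime p \<Longrightarrow> Factorial_Ring.prime q \<Longrightarrow> p dvd card M \<Longrightarrow> q dvd card N \<Longrightarrow>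
           subgroup K G \<Longrightarrow> card K = p * q \<Longrightarrow> \<not> comm_group (subgroup_generated G K)"
    and x: "x \<in> N" "x \<noteq> \<one>" and y: "y \<in> M" "y \<noteq> \<one>" and c: "x \<otimes> y = y \<otimes> x"
  shows False
proof -
  have xc: "x \<in> carrier G" by (rule subgroup.mem_carrier[OF sN x(1)])
  have yc: "y \<in> carrier G" by (rule subgroup.mem_carrier[OF sM y(1)])
  obtain q where q: "Factorial_Ring.prime q" "q dvd ord x" "ord (x [^] (ord x div q)) = q"
    using prime_elem[OF fin xc x(2)] by blast
  obtain r where r: "Factorial_Ring.prime r" "r dvd ord y" "ord (y [^] (ord y div r)) = r"
    using prime_elem[OF fin yc y(2)] by blast
  define x' where "x' = x [^] (ord x div q)"
  define y' where "y' = y [^] (ord y div r)"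
  have x'N: "x' \<in> N" unfolding x'_def by (rule sub_pow_closed[OF sN x(1)])
  have y'M: "y' \<in> M" unfolding y'_def by (rule sub_pow_closed[OF sM y(1)])
  have x'c: "x' \<in> carrier G" unfolding x'_def using xc by simp
  have y'c: "y' \<in> carrier G" unfolding y'_def using yc by simp
  have ox: "ord x' = q" using q(3) x'_def by simp
  have oy: "ord y' = r" using r(3) y'_def by simp
  have qN: "q dvd card N" using q(2) ord_dvd_sub[OF sN x(1) fin] by (rule dvd_trans)
  have rM: "r dvd card M" using r(2) ord_dvd_sub[OF sM y(1) fin] by (rule dvd_trans)
  have c1: "y \<otimes> x' = x' \<otimes> y" unfolding x'_def using comm_pow[OF xc yc c] by simp
  have c2: "x' \<otimes> y' = y' \<otimes> x'"
    unfolding y'_def using comm_pow[OF yc x'c c1] by simp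
  have ordG: "order G = card N * card M"
    using card_mult_sub[OF sN sM NM] prod by (simp add: order_def)
  have qr: "q \<noteq> r"
  proof
    assume "q = r"
    hence "q ^ 2 dvd order G" unfolding ordG power2_eq_square using qN rM by (simp add: mult_dvd_mono)
    hence "is_unit q" using sq unfolding squarefree_def by blast
    thus False using q(1) by simp
  qed
  define z where "z = x' \<otimes> y'"
  have zc: "z \<in> carrier G" unfolding z_def using x'c y'c by simp
  define K where "K = range (\<lambda>k::int. z [^] k)"
  have sK: "subgroup K G" unfolding K_def by (rule subgroup_of_powers[OF zc])
  have cardK: "card K = ord z"
    using generate_pow_card[OF zc] generate_pow[OF zc] unfolding K_def by (simp add: full_SetCompr_eq)
  have zpow: "z [^] n = x' [^] n \<otimes> y' [^] n" for n :: nat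
    unfolding z_def by (rule pow_mult_distrib[OF c2 x'c y'c])
  have "z [^] (q * r) = \<one>"
  proof -
    have "x' [^] (q * r) = \<one>" using x'c ox pow_ord_eq_1[OF x'c] by (simp add: nat_pow_pow[symmetric])
    moreover have "y' [^] (q * r) = \<one>" using y'c oy pow_ord_eq_1[OF y'c] by (simp add: nat_pow_pow[symmetric] mult.commute[of q r])
    ultimately show ?thesis using zpow by simp
  qed
  hence d1: "ord z dvd q * r" using pow_eq_id[OF zc] by simp
  have e: "x' [^] ord z \<otimes> y' [^] ord z = \<one>" using zpow[of "ord z"] zc by simp
  have "inv (y' [^] ord z) = x' [^] ord z" by (rule inv_equality[OF e]) (use x'c y'c in simp_all)
  moreover have "inv (y' [^] ord z) \<in> M" using sub_pow_closed[OF sM y'M] sM by (simp add: subgroup.m_inv_closed)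
  moreover have "x' [^] ord z \<in> N" using sub_pow_closed[OF sN x'N] by simp
  ultimately have ex: "x' [^] ord z = \<one>" using NM by auto
  hence ey: "y' [^] ord z = \<one>" using e x'c y'c by simp
  have "q dvd ord z" using ex pow_eq_id[OF x'c] ox by simp
  moreover have "r dvd ord z" using ey pow_eq_id[OF y'c] oy by simp
  moreover have "coprime q r" using primes_coprime[OF q(1) r(1) qr] .
  ultimately have "q * r dvd ord z" using divides_mult by blast
  hence oz: "ord z = q * r" using d1 by (simp add: dvd_antisym)
  have "comm_group (subgroup_generated G K)"
  proof (rule group.group_comm_groupI[OF group_subgroup_generated])
    fix a b assume ab: "a \<in> carrier (subgroup_generated G K)" "b \<in> carrier (subgroup_generated G K)"
    hence "a \<in> K" "b \<in> K" using subgroup.carrier_subgroup_generated_subgroup[OF sK] by auto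
    then obtain i j where ij: "a = z [^] (i::int)" "b = z [^] (j::int)" unfolding K_def by blast
    have "a \<otimes> b = b \<otimes> a" unfolding ij using int_pow_mult[OF zc, of i j] int_pow_mult[OF zc, of j i] by (simp add: add.commute)
    thus "a \<otimes>\<^bsub>subgroup_generated G K\<^esub> b = b \<otimes>\<^bsub>subgroup_generated G K\<^esub> a"
      by (simp add: subgroup_generated_def)
  qed
  moreover have "card K = r * q" using cardK oz by simp
  ultimately show False using hyp[OF r(1) q(1) rM qN sK] by blast
qed

end

context group begin

lemma inv_cancel_l: "x \<in> carrier G \<Longrightarrow> z \<in> carrier G \<Longrightarrow> inv x \<otimes> (x \<otimes> z) = z"
  by (simp add: m_assoc[symmetric])
lemma inv_cancel_r: "x \<in> carrier G \<Longrightarrow> z \<in> carrier G \<Longrightarrow> x \<otimes> (inv x \<otimes> z) = z"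
  by (simp add: m_assoc[symmetric])

lemma conj_iso: assumes g: "g \<in> carrier G" shows "(\<lambda>h. g \<otimes> h \<otimes> inv g) \<in> iso G G"
proof -
  have "(\<lambda>h. g \<otimes> h \<otimes> inv g) \<in> hom G G"
  proof (rule homI)
    fix a b show "a \<in> carrier G \<Longrightarrow> b \<in> carrier G \<Longrightarrow> g \<otimes> (a \<otimes> b) \<otimes> inv g = g \<otimes> a \<otimes> inv g \<otimes> (g \<otimes> b \<otimes> inv g)"
    proof -
      assume ab: "a \<in> carrier G" "b \<in> carrier G"
      have "g \<otimes> a \<otimes> inv g \<otimes> (g \<otimes> b \<otimes> inv g) = g \<otimes> (a \<otimes> (inv g \<otimes> (g \<otimes> (b \<otimes> inv g))))"
        using g ab by (simp add: m_assoc)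
      also have "\<dots> = g \<otimes> (a \<otimes> (b \<otimes> inv g))" using g ab by (simp add: inv_cancel_l)
      also have "\<dots> = g \<otimes> (a \<otimes> b) \<otimes> inv g" using g ab by (simp add: m_assoc)
      finally show ?thesis by simp
    qed
  qed (use g in simp)
  moreover have "bij_betw (\<lambda>h. g \<otimes> h \<otimes> inv g) (carrier G) (carrier G)"
    by (rule bij_betw_cong[THEN iffD1, OF _ conjugation_is_bij[OF g]]) simp
  ultimately show ?thesis unfolding iso_def by simp
qed

lemma bezout_mem:
  assumes "g \<in> carrier G" "subgroup H G" "g [^] (a::int) \<in> H" "g [^] (b::int) \<in> H" "coprime a b"
  shows "g \<in> H"
proof -
  obtain u v where uv: "u * a + v * b = gcd a b" using bezout_int by blast
  hence uv1: "u * a + v * b = 1" using assms(5) by simp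
  have "g = g [^] (u * a + v * b)" using uv1 assms(1) by simp
  also have "\<dots> = (g [^] a) [^] u \<otimes> (g [^] b) [^] v"
    using assms(1) by (simp add: int_pow_pow int_pow_mult mult.commute)
  also have "\<dots> \<in> H"
    by (rule subgroup.m_closed[OF assms(2) subgroup_int_pow_closed[OF assms(2,3)] subgroup_int_pow_closed[OF assms(2,4)]])
  finally show ?thesis .
qed

end

context group begin

lemma main3p1:
  assumes fin: "finite (carrier G)" and sq: "squarefree (order G)" and cen: "group_centre G = {\<one>}"
    and nN: "N \<lhd> G" and sM: "subgroup M G" and NM: "N \<inter> M = {\<one>}" and prod: "N <#> M = carrier G"
    and cN: "cyclic_group (subgroup_generated G N)" and cM: "cyclic_group (subgroup_generated G M)"
    and hyp: "\<And>p q K. Factorial_Ring.prime p \<Longrightarrow> Factorial_Ring.prime q \<Longrightarrow> p dvd card M \<Longrightarrow> q dvd card N \<Longrightarrow>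
           subgroup K G \<Longrightarrow> card K = p * q \<Longrightarrow> \<not> comm_group (subgroup_generated G K)"
    and ch: "characteristic H G" and pr: "Factorial_Ring.prime (card (rcosets H))"
    and np: "\<not> Factorial_Ring.prime (card M)"
    and phi: "\<phi> \<in> iso G G" and phiH: "\<forall>h\<in>H. \<phi> h = h" and xc: "x \<in> carrier G"
  shows "\<phi> x = x"
proof -
  have sN: "subgroup N G" using nN by (rule normal_imp_subgroup)
  have sH: "subgroup H G" using ch unfolding characteristic_def by blast
  have Hconj: "g \<otimes> h \<otimes> inv g \<in> H" if "g \<in> carrier G" "h \<in> H" for g h
  proof -
    have "(\<lambda>h. g \<otimes> h \<otimes> inv g) ` H = H" using ch conj_iso[OF that(1)] unfolding characteristic_def by blast
    thus ?thesis using that(2) by blast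
  qed
  have nH: "H \<lhd> G" unfolding normal_inv_iff using sH Hconj by blast
  define p where "p = card (rcosets H)"
  have comm: "a \<otimes> b \<otimes> inv a \<otimes> inv b \<in> H" if "a \<in> carrier G" "b \<in> carrier G" for a b
    using quot_facts(1)[OF nH pr that] .
  have powp: "a [^] p \<in> H" if "a \<in> carrier G" for a
    unfolding p_def using quot_facts(2)[OF nH pr that that] .
  have NC: "False" if "u \<in> N" "u \<noteq> \<one>" "v \<in> M" "v \<noteq> \<one>" "u \<otimes> v = v \<otimes> u" for u v
    by (rule no_comm[OF fin sN sM NM sq prod _ that]) (use hyp in blast)
  have nontriv: "\<exists>a\<in>carrier G. \<exists>b\<in>carrier G. a \<otimes> b \<noteq> b \<otimes> a"
  proof (rule ccontr)
    assume "\<not> ?thesis"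
    hence "carrier G \<subseteq> group_centre G" unfolding group_centre_def by auto
    hence cG: "carrier G = {\<one>}" using cen by auto
    have "H \<subseteq> carrier G" "\<one> \<in> H" using sH subgroup.subset subgroup.one_closed by blast+
    hence H1: "H = {\<one>}" using cG by auto
    have "rcosets H = {H}" unfolding RCOSETS_def cG using coset_mult_one[OF sH[THEN subgroup.subset]] by simp
    thus False using pr by simp
  qed
  from cyclic_sub[OF sN cN] obtain g where g: "g \<in> N" "N = range (\<lambda>k::int. g [^] k)" ..
  from cyclic_sub[OF sM cM] obtain a0 where a0: "a0 \<in> M" "M = range (\<lambda>k::int. a0 [^] k)" ..
  have gc: "g \<in> carrier G" by (rule subgroup.mem_carrier[OF sN g(1)])
  have a0c: "a0 \<in> carrier G" by (rule subgroup.mem_carrier[OF sM a0(1)])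
  have commN: "u \<otimes> v = v \<otimes> u" if uv: "u \<in> N" "v \<in> N" for u v
  proof -
    obtain i j where "u = g [^] (i::int)" "v = g [^] (j::int)" using uv g(2) by blast
    thus ?thesis using int_pow_mult[OF gc, of i j] int_pow_mult[OF gc, of j i] by (simp add: add.commute)
  qed
  have commM: "u \<otimes> v = v \<otimes> u" if uv: "u \<in> M" "v \<in> M" for u v
  proof -
    obtain i j where "u = a0 [^] (i::int)" "v = a0 [^] (j::int)" using uv a0(2) by blast
    thus ?thesis using int_pow_mult[OF a0c, of i j] int_pow_mult[OF a0c, of j i] by (simp add: add.commute)
  qed
  have Ncar: "N \<subseteq> carrier G" using sN subgroup.subset by blast
  have Mcar: "M \<subseteq> carrier G" using sM subgroup.subset by blast
  have "N \<noteq> {\<one>}"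
  proof
    assume "N = {\<one>}"
    moreover have "{\<one>} <#> M = M"
    proof
      show "{\<one>} <#> M \<subseteq> M" unfolding set_mult_def using Mcar by auto
      show "M \<subseteq> {\<one>} <#> M" unfolding set_mult_def using Mcar by force
    qed
    ultimately have "carrier G = M" using prod by simp
    thus False using nontriv commM by auto
  qed
  then obtain z0 where z0: "z0 \<in> N" "z0 \<noteq> \<one>" using sN subgroup.one_closed by blast
  have "M \<noteq> {\<one>}"
  proof
    assume "M = {\<one>}"
    moreover have "N <#> {\<one>} = N"
    proof
      show "N <#> {\<one>} \<subseteq> N" unfolding set_mult_def using Ncar by auto
      show "N \<subseteq> N <#> {\<one>}" unfolding set_mult_def using Ncar by force
    qed
    ultimately have "carrier G = N" using prod by simp
    thus False using nontriv commN by auto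
  qed
  then obtain y0 where y0: "y0 \<in> M" "y0 \<noteq> \<one>" using sM subgroup.one_closed by blast
  have y0c: "y0 \<in> carrier G" using y0 Mcar by blast
  have cardN: "card N = ord g"
    using generate_pow_card[OF gc] generate_pow[OF gc] g(2) by (simp add: full_SetCompr_eq)
  have gH: "g \<in> H"
  proof (cases "p dvd ord g")
    case False
    have "coprime p (ord g)" using prime_imp_coprime[OF pr[folded p_def] False] .
    hence cp: "coprime (int p) (int (ord g))" by simp
    have "g [^] (int p) \<in> H" using powp[OF gc] by (simp add: int_pow_int)
    moreover have "g [^] (int (ord g)) \<in> H" using gc sH subgroup.one_closed by (simp add: int_pow_int)
    ultimately show ?thesis using bezout_mem[OF gc sH _ _ cp] by blast
  next
    case True
    have p0: "p \<noteq> 0" using pr p_def by auto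
    have og0: "ord g \<noteq> 0" using ord_ge_1[OF fin gc] by simp
    define x1 where "x1 = g [^] (ord g div p)"
    have x1c: "x1 \<in> carrier G" unfolding x1_def using gc by simp
    have x1N: "x1 \<in> N" unfolding x1_def by (rule sub_pow_closed[OF sN g(1)])
    have ox1: "ord x1 = p"
    proof -
      obtain k where k: "ord g = p * k" using True by (elim dvdE)
      hence k0: "k \<noteq> 0" using og0 by auto
      have "ord x1 = ord g div (ord g div p)" unfolding x1_def
        by (rule ord_pow[OF gc]) (use k k0 p0 in auto)
      thus ?thesis using k k0 p0 by simp
    qed
    have x1ne: "x1 \<noteq> \<one>" using ox1 pr p_def ord_eq_1[OF x1c] by auto
    have "y0 \<otimes> g \<otimes> inv y0 \<in> N" using nN y0c g(1) unfolding normal_inv_iff by blast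
    then obtain k where k: "y0 \<otimes> g \<otimes> inv y0 = g [^] (k::int)" using g(2) by blast
    have "y0 \<otimes> g \<otimes> inv y0 \<otimes> inv g \<in> H" using comm[OF y0c gc] .
    hence gk1: "g [^] (k - 1) \<in> H" using k gc by (simp add: int_pow_diff)
    have hc: "(\<lambda>h. y0 \<otimes> h \<otimes> inv y0) \<in> hom G G" using conj_iso[OF y0c] unfolding iso_def by blast
    have "y0 \<otimes> x1 \<otimes> inv y0 = (y0 \<otimes> g \<otimes> inv y0) [^] (ord g div p)"
      unfolding x1_def using hom_nat_pow[OF hc gc is_group is_group] .
    also have "\<dots> = (g [^] k) [^] (int (ord g div p))" using k by (simp add: int_pow_int)
    also have "\<dots> = (g [^] (int (ord g div p))) [^] k" using gc by (simp add: int_pow_pow mult.commute)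
    also have "\<dots> = x1 [^] k" unfolding x1_def by (simp add: int_pow_int)
    finally have cx1: "y0 \<otimes> x1 \<otimes> inv y0 = x1 [^] k" .
    have "\<not> int p dvd (k - 1)"
    proof
      assume "int p dvd (k - 1)"
      hence "x1 [^] (k - 1) = \<one>" using int_pow_eq_id[OF x1c] ox1 by simp
      hence "x1 [^] k = x1" using x1c int_pow_mult[OF x1c, of "k - 1" 1] by simp
      hence "y0 \<otimes> x1 \<otimes> inv y0 = x1" using cx1 by simp
      moreover have "y0 \<otimes> x1 = (y0 \<otimes> x1 \<otimes> inv y0) \<otimes> y0" using x1c y0c by (simp add: m_assoc)
      ultimately have "y0 \<otimes> x1 = x1 \<otimes> y0" by simp
      thus False using NC[OF x1N x1ne y0] by simp
    qed
    hence "coprime (k - 1) (int p)"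
      using prime_imp_coprime[of "int p" "k - 1"] pr p_def by (simp add: coprime_commute)
    moreover have "g [^] (int p) \<in> H" using powp[OF gc] by (simp add: int_pow_int)
    ultimately show ?thesis using bezout_mem[OF gc sH gk1] by blast
  qed
  have NH: "N \<subseteq> H"
  proof
    fix u assume "u \<in> N"
    then obtain k where "u = g [^] (k::int)" using g(2) by blast
    thus "u \<in> H" using subgroup_int_pow_closed[OF sH gH] by simp
  qed
  have "\<exists>a1. a1 \<in> H \<and> a1 \<in> M \<and> a1 \<noteq> \<one>"
  proof (rule ccontr)
    assume "\<not> ?thesis"
    hence HM: "a \<in> H \<Longrightarrow> a \<in> M \<Longrightarrow> a = \<one>" for a by blast
    have "rcosets H = (\<lambda>y. H #> y) ` M"
    proof
      show "rcosets H \<subseteq> (\<lambda>y. H #> y) ` M"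
      proof
        fix C assume "C \<in> rcosets H"
        then obtain a where a: "a \<in> carrier G" "C = H #> a" unfolding RCOSETS_def by blast
        then obtain n' m' where nm: "n' \<in> N" "m' \<in> M" "a = n' \<otimes> m'" using prod unfolding set_mult_def by blast
        have n'c: "n' \<in> carrier G" using nm(1) Ncar by blast
        have m'c: "m' \<in> carrier G" using nm(2) Mcar by blast
        have "H #> a = (H #> n') #> m'" unfolding nm(3) by (rule coset_mult_assoc[OF sH[THEN subgroup.subset] n'c m'c, symmetric])
        also have "\<dots> = H #> m'" using coset_join2[OF n'c sH] nm(1) NH by auto
        finally show "C \<in> (\<lambda>y. H #> y) ` M" using a nm by blast
      qed
      show "(\<lambda>y. H #> y) ` M \<subseteq> rcosets H" using Mcar rcosetsI sH subgroup.subset by blast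
    qed
    moreover have "inj_on (\<lambda>y. H #> y) M"
    proof (rule inj_onI)
      fix y1 y2 assume y: "y1 \<in> M" "y2 \<in> M" "H #> y1 = H #> y2"
      have y1c: "y1 \<in> carrier G" "y2 \<in> carrier G" using y Mcar by auto
      have "y1 \<in> H #> y2" using rcos_self[OF y1c(1) sH] y(3) by simp
      hence hH: "y1 \<otimes> inv y2 \<in> H" by (rule subgroup.rcos_module_imp[OF sH is_group y1c(2)])
      have hM: "y1 \<otimes> inv y2 \<in> M" by (rule subgroup.m_closed[OF sM y(1) subgroup.m_inv_closed[OF sM y(2)]])
      have h1: "y1 \<otimes> inv y2 = \<one>" using HM[OF hH hM] .
      have "y1 = y1 \<otimes> inv y2 \<otimes> y2" using y1c by (simp add: m_assoc)
      thus "y1 = y2" using h1 y1c by simp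
    qed
    ultimately have "card (rcosets H) = card M" by (simp add: card_image)
    thus False using pr np by simp
  qed
  then obtain a1 where a1: "a1 \<in> H" "a1 \<in> M" "a1 \<noteq> \<one>" by blast
  have hom: "\<phi> \<in> hom G G" using phi unfolding iso_def by blast
  have gh: "group_hom G G \<phi>" unfolding group_hom_def group_hom_axioms_def using hom is_group by simp
  have "\<phi> \<in> carrier G \<rightarrow> carrier G" using hom unfolding hom_def by simp
  hence pxc: "\<phi> x \<in> carrier G" using xc by (rule funcset_mem)
  define c where "c = inv x \<otimes> \<phi> x"
  have cc: "c \<in> carrier G" unfolding c_def by (rule m_closed[OF inv_closed[OF xc] pxc])
  have cH: "c \<otimes> h = h \<otimes> c" if "h \<in> H" for h
  proof -
    have hc: "h \<in> carrier G" by (rule subgroup.mem_carrier[OF sH that])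
    have e1: "\<phi> (x \<otimes> h \<otimes> inv x) = x \<otimes> h \<otimes> inv x" by (rule bspec[OF phiH Hconj[OF xc that]])
    have e2: "\<phi> (x \<otimes> h \<otimes> inv x) = \<phi> (x \<otimes> h) \<otimes> \<phi> (inv x)"
      by (rule hom_mult[OF hom m_closed[OF xc hc] inv_closed[OF xc]])
    have e3: "\<phi> (x \<otimes> h) = \<phi> x \<otimes> h" using hom_mult[OF hom xc hc] bspec[OF phiH that] by simp
    have e4: "\<phi> (inv x) = inv (\<phi> x)" by (rule group_hom.hom_inv[OF gh xc])
    have "\<phi> x \<otimes> h \<otimes> inv (\<phi> x) = \<phi> (x \<otimes> h) \<otimes> \<phi> (inv x)" unfolding e3 e4 ..
    also have "\<dots> = \<phi> (x \<otimes> h \<otimes> inv x)" by (rule e2[symmetric])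
    also have "\<dots> = x \<otimes> h \<otimes> inv x" by (rule e1)
    finally have e: "\<phi> x \<otimes> h \<otimes> inv (\<phi> x) = x \<otimes> h \<otimes> inv x" .
    have "c \<otimes> h = inv x \<otimes> (\<phi> x \<otimes> h \<otimes> inv (\<phi> x)) \<otimes> \<phi> x"
      unfolding c_def using xc hc pxc by (simp add: m_assoc)
    also have "\<dots> = inv x \<otimes> (x \<otimes> h \<otimes> inv x) \<otimes> \<phi> x" using e by simp
    also have "\<dots> = h \<otimes> c" unfolding c_def using xc hc pxc by (simp add: m_assoc inv_cancel_l)
    finally show ?thesis .
  qed
  obtain n0 m0 where nm0: "n0 \<in> N" "m0 \<in> M" "c = n0 \<otimes> m0" using cc prod unfolding set_mult_def by blast
  have n0c: "n0 \<in> carrier G" using nm0 Ncar by blast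
  have m0c: "m0 \<in> carrier G" using nm0 Mcar by blast
  have "m0 = \<one>"
  proof (rule ccontr)
    assume m0ne: "m0 \<noteq> \<one>"
    have z0c: "z0 \<in> carrier G" using z0 Ncar by blast
    have "n0 \<otimes> (m0 \<otimes> z0) = c \<otimes> z0" using nm0 n0c m0c z0c by (simp add: m_assoc)
    also have "\<dots> = z0 \<otimes> c" using cH NH z0 by blast
    also have "\<dots> = (z0 \<otimes> n0) \<otimes> m0" using nm0 n0c m0c z0c by (simp add: m_assoc)
    also have "\<dots> = (n0 \<otimes> z0) \<otimes> m0" using commN[OF z0(1) nm0(1)] by simp
    also have "\<dots> = n0 \<otimes> (z0 \<otimes> m0)" using n0c m0c z0c by (simp add: m_assoc)
    finally have "m0 \<otimes> z0 = z0 \<otimes> m0" using n0c m0c z0c by simp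
    thus False using NC[OF z0 nm0(2) m0ne] by simp
  qed
  hence cN: "c \<in> N" using nm0 n0c by simp
  have "c = \<one>"
  proof (rule ccontr)
    assume "c \<noteq> \<one>"
    thus False using NC[OF cN _ a1(2,3)] cH[OF a1(1)] by blast
  qed
  hence "x \<otimes> c = x" using xc by simp
  thus ?thesis unfolding c_def using xc pxc by (simp add: inv_cancel_r)
qed

end

theorem lemma3p1:
  fixes R :: "('a, 'b) monoid_scheme" and N M H :: "'a set" and n m :: nat
  assumes "group R"
    and "finite (carrier R)"
    and "squarefree (order R)"
    and "group_centre R = {\<one>\<^bsub>R\<^esub>}"
    and "N \<lhd> R" and "subgroup M R"
    and "N \<inter> M = {\<one>\<^bsub>R\<^esub>}" and "N <#>\<^bsub>R\<^esub> M = carrier R"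
    and "cyclic_group (subgroup_generated R N)" and "card N = n"
    and "cyclic_group (subgroup_generated R M)" and "card M = m"
    and "\<And>p q K. Factorial_Ring.prime p \<Longrightarrow> Factorial_Ring.prime q \<Longrightarrow> p dvd m \<Longrightarrow> q dvd n \<Longrightarrow>
           subgroup K R \<Longrightarrow> card K = p * q \<Longrightarrow> \<not> comm_group (subgroup_generated R K)"
    and "characteristic H R"
    and "Factorial_Ring.prime (card (rcosets\<^bsub>R\<^esub> H))"
    and "\<not> Factorial_Ring.prime m"
  shows "\<forall>\<phi> \<in> iso R R. (\<forall>h \<in> H. \<phi> h = h) \<longrightarrow> (\<forall>x \<in> carrier R. \<phi> x = x)"
proof (intro ballI impI)
  fix \<phi> x assume phi: "\<phi> \<in> iso R R" and phiH: "\<forall>h\<in>H. \<phi> h = h" and xc: "x \<in> carrier R"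
  have hyp': "\<And>p q K. Factorial_Ring.prime p \<Longrightarrow> Factorial_Ring.prime q \<Longrightarrow> p dvd card M \<Longrightarrow> q dvd card N \<Longrightarrow>
           subgroup K R \<Longrightarrow> card K = p * q \<Longrightarrow> \<not> comm_group (subgroup_generated R K)"
    using assms(13) unfolding assms(10) assms(12) by blast
  have np: "\<not> Factorial_Ring.prime (card M)" using assms(16) assms(12) by simp
  show "\<phi> x = x"
    by (rule group.main3p1[OF assms(1) assms(2) assms(3) assms(4) assms(5) assms(6) assms(7) assms(8) assms(9) assms(11) _ assms(14) assms(15) np phi phiH xc])
      (use hyp' in blast)
qed

end
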